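(* Let $0<r_j<\infty$ and $0<s_j<\infty$ for $j=1,\dots,n$, and let $\gamma(\mathbf{r})=\otimes_{j=1}^n\gamma(r_j)$, $\gamma(\mathbf{s})=\otimes_{j=1}^n\gamma(s_j)$. Then: (1) If $r_j\ge s_j$ for all $j$, then $D_\alpha(\gamma(\mathbf{r})\|\gamma(\mathbf{s}))<\infty$ for every $\alpha\in(0,1)\cup(1,\infty)$. (2) If $r_j<s_j$ for some $j$, then for $\alpha\in(0,1)\cup(1,\infty)$, $$D_\alpha(\gamma(\mathbf{r})\|\gamma(\mathbf{s}))<\infty\iff\alpha<\min\left\{\frac{s_j}{s_j-r_j}: j\in\{1,\dots,n\}\text{ such that } r_j<s_j\right\}.$$
   Context: One-mode Fock space: $\ell^2(\mathbb{Z}_{\ge 0})$ with orthonormal particle basis $\{|k\rangle\}$; $n$-mode space is the $n$-fold tensor product. For $0<s<\infty$, the thermal state is $\gamma(s)=(1-e^{-s})\sum_{k\ge0}e^{-ks}|k\rangle\langle k|$. For states $\rho=\sum_i p_i|x_i\rangle\langle x_i|$, $\sigma=\sum_j q_j|y_j\rangle\langle y_j|$ (spectral decompositions with orthonormal bases), the Petz–Rényi relative entropy is $D_\alpha(\rho\|\sigma)=\frac{1}{\alpha-1}\log\sum_{i,j}p_i^\alpha q_j^{1-\alpha}|\langle x_i|y_j\rangle|^2$ for $\alpha\in(0,1)\cup(1,\infty)$. *)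

theory Defs
  imports "HOL-Analysis.Analysis"
begin

text \<open>Petz--Renyi relative entropy of two states given by spectral decompositions
  rho = sum over i in I of p i |x i><x i| and sigma = sum over j in J of q j |y j><y j|
  (orthonormal families x, y), with respect to an inner product ip.
  The double sum of non-negative terms is taken in ennreal (it may be infinite);
  the result lives in ereal, with log 0 = -infinity and log infinity = +infinity.\<close>
definition petz_renyi ::
  "real \<Rightarrow> 'i set \<Rightarrow> ('i \<Rightarrow> real) \<Rightarrow> ('i \<Rightarrow> 'v) \<Rightarrow>
   'j set \<Rightarrow> ('j \<Rightarrow> real) \<Rightarrow> ('j \<Rightarrow> 'v) \<Rightarrow> ('v \<Rightarrow> 'v \<Rightarrow> complex) \<Rightarrow> ereal" where
  "petz_renyi \<alpha> I p x J q y ip =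
     (let S = (\<Sum>\<^sub>\<infinity>(i,j)\<in>I \<times> J.
                 ennreal (p i powr \<alpha> * q j powr (1 - \<alpha>) * (cmod (ip (x i) (y j)))\<^sup>2))
      in if S = top then (if \<alpha> > 1 then \<infinity> else - \<infinity>)
         else if S = 0 then (if \<alpha> > 1 then - \<infinity> else \<infinity>)
         else ereal (1 / (\<alpha> - 1) * ln (enn2real S)))"

text \<open>n-mode Fock space: l2 of the multi-indices (occupation numbers of modes 0..n-1),
  i.e. the n-fold tensor product of l2(Z_{>=0}); vectors are functions on multi-indices.\<close>
definition multi_idx :: "nat \<Rightarrow> (nat \<Rightarrow> nat) set" where
  "multi_idx n = PiE {..<n} (\<lambda>_. UNIV)"

definition fock_inner :: "((nat \<Rightarrow> nat) \<Rightarrow> complex) \<Rightarrow> ((nat \<Rightarrow> nat) \<Rightarrow> complex) \<Rightarrow> complex" where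
  "fock_inner f g = (\<Sum>\<^sub>\<infinity>k. cnj (f k) * g k)"

definition ket :: "(nat \<Rightarrow> nat) \<Rightarrow> ((nat \<Rightarrow> nat) \<Rightarrow> complex)" where
  "ket k = (\<lambda>l. if l = k then 1 else 0)"

text \<open>Eigenvalue of the one-mode thermal state gamma(s) on |k>.\<close>
definition thermal_ev :: "real \<Rightarrow> nat \<Rightarrow> real" where
  "thermal_ev s k = (1 - exp (- s)) * exp (- real k * s)"

definition thermal_multi_ev :: "nat \<Rightarrow> (nat \<Rightarrow> real) \<Rightarrow> (nat \<Rightarrow> nat) \<Rightarrow> real" where
  "thermal_multi_ev n r k = (\<Prod>j<n. thermal_ev (r j) (k j))"

definition D_thermal :: "real \<Rightarrow> nat \<Rightarrow> (nat \<Rightarrow> real) \<Rightarrow> (nat \<Rightarrow> real) \<Rightarrow> ereal" where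
  "D_thermal \<alpha> n r s =
     petz_renyi \<alpha> (multi_idx n) (thermal_multi_ev n r) ket
                  (multi_idx n) (thermal_multi_ev n s) ket fock_inner"

end

theory Submission
  imports Defs "HOL-Analysis.Infinite_Set_Sum"
begin


lemma fock_ket: "fock_inner (ket i) (ket j) = (if i = j then 1 else 0)"
proof (cases "i = j")
  case True
  have "fock_inner (ket i) (ket j) = (\<Sum>\<^sub>\<infinity>k\<in>{i}. cnj (ket i k) * ket j k)"
    unfolding fock_inner_def by (rule infsum_cong_neutral) (auto simp: ket_def True)
  then show ?thesis using True by (simp add: ket_def)
next
  case False
  then show ?thesis unfolding fock_inner_def ket_def by (auto intro!: infsum_0)
qed

lemma diag_sum:
  fixes F :: "'a \<Rightarrow> 'a \<Rightarrow> ennreal"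
  assumes "\<And>i j. i \<noteq> j \<Longrightarrow> F i j = 0"
  shows "(\<Sum>\<^sub>\<infinity>(i,j)\<in>I \<times> I. F i j) = (\<Sum>\<^sub>\<infinity>k\<in>I. F k k)"
proof -
  have "(\<Sum>\<^sub>\<infinity>(i,j)\<in>I \<times> I. F i j) = (\<Sum>\<^sub>\<infinity>(i,j)\<in>(\<lambda>k. (k,k)) ` I. F i j)"
    by (rule infsum_cong_neutral) (auto simp: assms image_iff)
  also have "\<dots> = (\<Sum>\<^sub>\<infinity>k\<in>I. F k k)"
    by (subst infsum_reindex) (auto simp: inj_on_def o_def)
  finally show ?thesis .
qed



lemma ev_factor:
  assumes "0 < r" "0 < s"
  shows "thermal_ev r m powr a * thermal_ev s m powr (1 - a) =
     ((1 - exp (-r)) powr a * (1 - exp (-s)) powr (1 - a)) * exp (- (a * r + (1 - a) * s)) ^ m"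
proof -
  have r1: "0 < 1 - exp (-r)" "0 < 1 - exp (-s)" using assms by auto
  have e: "exp x powr b = exp (b * x)" for x b :: real by (simp add: powr_def)
  have "thermal_ev r m powr a * thermal_ev s m powr (1 - a) =
     (1 - exp (-r)) powr a * (1 - exp (-s)) powr (1 - a) * (exp (a * (- real m * r)) * exp ((1-a) * (- real m * s)))"
    unfolding thermal_ev_def using r1 by (simp add: powr_mult e)
  also have "exp (a * (- real m * r)) * exp ((1-a) * (- real m * s)) = exp (real m * (- (a * r + (1 - a) * s)))"
    by (simp add: exp_add[symmetric] algebra_simps)
  also have "\<dots> = exp (- (a * r + (1 - a) * s)) ^ m" by (simp add: exp_of_nat_mult)
  finally show ?thesis by simp
qed

lemma multi_factor:
  assumes "\<forall>j<n. 0 < r j" "\<forall>j<n. 0 < s j"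
  shows "thermal_multi_ev n r k powr a * thermal_multi_ev n s k powr (1 - a) =
    (\<Prod>j<n. ((1 - exp (-r j)) powr a * (1 - exp (-s j)) powr (1 - a)) * exp (- (a * r j + (1 - a) * s j)) ^ (k j))"
proof -
  have nn: "\<And>j. j < n \<Longrightarrow> 0 \<le> thermal_ev (r j) (k j)" "\<And>j. j < n \<Longrightarrow> 0 \<le> thermal_ev (s j) (k j)"
    using assms by (auto simp: thermal_ev_def)
  have "thermal_multi_ev n r k powr a * thermal_multi_ev n s k powr (1 - a) =
     (\<Prod>j<n. thermal_ev (r j) (k j) powr a * thermal_ev (s j) (k j) powr (1 - a))"
    unfolding thermal_multi_ev_def using nn
    by (simp add: prod_powr_distrib prod.distrib)
  also have "\<dots> = (\<Prod>j<n. ((1 - exp (-r j)) powr a * (1 - exp (-s j)) powr (1 - a)) * exp (- (a * r j + (1 - a) * s j)) ^ (k j))"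
    using assms by (intro prod.cong refl ev_factor) auto
  finally show ?thesis .
qed


lemma S_finite:
  fixes c q :: "nat \<Rightarrow> real"
  assumes c: "\<forall>j<n. 0 < c j" and q: "\<forall>j<n. 0 < q j \<and> q j < 1"
  shows "(\<Sum>\<^sub>\<infinity>k\<in>multi_idx n. ennreal (\<Prod>j<n. c j * q j ^ k j)) \<noteq> top"
proof -
  define G where "G k = (\<Prod>j<n. c j * q j ^ k j)" for k :: "nat \<Rightarrow> nat"
  have Gnn: "0 \<le> G k" for k unfolding G_def using c q by (auto intro!: prod_nonneg mult_nonneg_nonneg zero_le_power simp: less_imp_le)
  have "Infinite_Set_Sum.abs_summable_on (\<lambda>m. c j * q j ^ m) UNIV" if "j < n" for j
  proof -
    have "summable (\<lambda>m. c j * q j ^ m)"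
      using q that by (intro summable_mult summable_geometric) auto
    moreover have "norm (c j * q j ^ m) = c j * q j ^ m" for m
      unfolding real_norm_def by (rule abs_of_nonneg) (use c q that in \<open>auto intro!: mult_nonneg_nonneg zero_le_power simp: less_imp_le\<close>)
    ultimately show ?thesis by (simp add: abs_summable_on_nat_iff')
  qed
  then have "Infinite_Set_Sum.abs_summable_on (\<lambda>k. \<Prod>j\<in>{..<n}. c j * q j ^ k j) (PiE {..<n} (\<lambda>_. UNIV))"
    by (intro abs_summable_on_prod_PiE) auto
  then have "Infinite_Sum.abs_summable_on G (multi_idx n)"
    unfolding multi_idx_def G_def by (intro abs_summable_equivalent[THEN iffD2])
  then have sG: "G summable_on (multi_idx n)"
    using Gnn by (simp add: abs_summable_on_def)
  have "(\<Sum>\<^sub>\<infinity>k\<in>multi_idx n. ennreal (G k)) = infsum (ennreal \<circ> G) (multi_idx n)"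
    by (simp add: o_def)
  also have "\<dots> = ennreal (infsum G (multi_idx n))"
    by (rule infsum_comm_additive_general) (auto simp: sG Gnn sum_ennreal)
  finally show ?thesis unfolding G_def by simp
qed

lemma S_nonzero:
  fixes c q :: "nat \<Rightarrow> real"
  assumes c: "\<forall>j<n. 0 < c j" and q: "\<forall>j<n. 0 < q j"
  shows "(\<Sum>\<^sub>\<infinity>k\<in>multi_idx n. ennreal (\<Prod>j<n. c j * q j ^ k j)) \<noteq> 0"
proof -
  define k0 where "k0 = (\<lambda>i::nat. if i < n then 0::nat else undefined)"
  have k0: "k0 \<in> multi_idx n" unfolding multi_idx_def k0_def by (auto split: if_splits)
  have pos: "0 < (\<Prod>j<n. c j * q j ^ k0 j)" using c q by (auto intro!: prod_pos)
  have "(\<Sum>\<^sub>\<infinity>k\<in>{k0}. ennreal (\<Prod>j<n. c j * q j ^ k j)) \<le> (\<Sum>\<^sub>\<infinity>k\<in>multi_idx n. ennreal (\<Prod>j<n. c j * q j ^ k j))"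
    by (rule infsum_mono_neutral) (use k0 in \<open>auto intro: nonneg_summable_on_complete\<close>)
  then have le: "ennreal (\<Prod>j<n. c j * q j ^ k0 j) \<le> (\<Sum>\<^sub>\<infinity>k\<in>multi_idx n. ennreal (\<Prod>j<n. c j * q j ^ k j))"
    by simp
  have p2: "0 < ennreal (\<Prod>j<n. c j * q j ^ k0 j)" using pos by simp
  have "0 < (\<Sum>\<^sub>\<infinity>k\<in>multi_idx n. ennreal (\<Prod>j<n. c j * q j ^ k j))"
    using p2 le by (rule less_le_trans)
  then show ?thesis by simp
qed

lemma S_infinite:
  fixes c q :: "nat \<Rightarrow> real"
  assumes c: "\<forall>j<n. 0 < c j" and q: "\<forall>j<n. 0 < q j" and j: "j < n" "1 \<le> q j"
  shows "(\<Sum>\<^sub>\<infinity>k\<in>multi_idx n. ennreal (\<Prod>j<n. c j * q j ^ k j)) = top"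
proof -
  define f where "f m = (\<lambda>i::nat. if i < n then (if i = j then m else 0::nat) else undefined)" for m :: nat
  define T where "T = range f"
  have TA: "T \<subseteq> multi_idx n" unfolding T_def f_def multi_idx_def by (auto split: if_splits)
  have "inj f"
  proof
    fix x y assume "f x = f y"
    then have "f x j = f y j" by simp
    then show "x = y" using j by (simp add: f_def)
  qed
  then have inf: "infinite T" unfolding T_def using finite_imageD by blast
  have pos: "0 < (\<Prod>j<n. c j)" using c by (auto intro!: prod_pos)
  have lb: "ennreal (\<Prod>j<n. c j) \<le> ennreal (\<Prod>j<n. c j * q j ^ k j)" if "k \<in> T" for k
  proof (rule ennreal_leI, rule prod_mono)
    fix i assume i: "i \<in> {..<n}"
    have "1 \<le> q i ^ k i"
    proof (cases "i = j")
      case True then show ?thesis using j by simp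
    next
      case False then have "k i = 0" using that i unfolding T_def f_def by auto
      then show ?thesis by simp
    qed
    then have "c i * 1 \<le> c i * q i ^ k i" using c i
      by (intro mult_left_mono) (auto simp: less_imp_le)
    then show "0 \<le> c i \<and> c i \<le> c i * q i ^ k i" using c i
      by (simp add: less_imp_le)
  qed
  have "(\<Sum>\<^sub>\<infinity>k\<in>T. ennreal (\<Prod>j<n. c j * q j ^ k j)) = \<infinity>"
    by (rule infsum_superconst_infinite_ennreal[where b="ennreal (\<Prod>j<n. c j)"]) (use lb pos inf in auto)
  moreover have "(\<Sum>\<^sub>\<infinity>k\<in>T. ennreal (\<Prod>j<n. c j * q j ^ k j)) \<le> (\<Sum>\<^sub>\<infinity>k\<in>multi_idx n. ennreal (\<Prod>j<n. c j * q j ^ k j))"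
    by (rule infsum_mono_neutral) (use TA in \<open>auto intro: nonneg_summable_on_complete\<close>)
  ultimately show ?thesis by (simp add: top_unique infinity_ennreal_def)
qed


theorem corollary3p4:
  fixes n :: nat and r s :: "nat \<Rightarrow> real" and \<alpha> :: real
  assumes "\<forall>j<n. 0 < r j" and "\<forall>j<n. 0 < s j"
    and "0 < \<alpha>" and "\<alpha> \<noteq> 1"
  shows "((\<forall>j<n. s j \<le> r j) \<longrightarrow> D_thermal \<alpha> n r s < \<infinity>) \<and>
         ((\<exists>j<n. r j < s j) \<longrightarrow>
            (D_thermal \<alpha> n r s < \<infinity> \<longleftrightarrow>
             \<alpha> < Min {s j / (s j - r j) | j. j < n \<and> r j < s j}))"
proof -
  define c where "c j = (1 - exp (-r j)) powr \<alpha> * (1 - exp (-s j)) powr (1 - \<alpha>)" for j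
  define t where "t j = \<alpha> * r j + (1 - \<alpha>) * s j" for j
  define q where "q j = exp (- t j)" for j
  define S where "S = (\<Sum>\<^sub>\<infinity>(i,j)\<in>multi_idx n \<times> multi_idx n.
                 ennreal (thermal_multi_ev n r i powr \<alpha> * thermal_multi_ev n s j powr (1 - \<alpha>) * (cmod (fock_inner (ket i) (ket j)))\<^sup>2))"
  have cpos: "\<forall>j<n. 0 < c j"
  proof (intro allI impI)
    fix j assume "j < n"
    then have "exp (- r j) < 1" "exp (- s j) < 1" using assms(1,2) by auto
    then show "0 < c j" unfolding c_def by (intro mult_pos_pos) auto
  qed
  have qpos: "\<forall>j<n. 0 < q j" by (auto simp: q_def)
  have S_eq: "S = (\<Sum>\<^sub>\<infinity>k\<in>multi_idx n. ennreal (\<Prod>j<n. c j * q j ^ k j))"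
  proof -
    have "S = (\<Sum>\<^sub>\<infinity>k\<in>multi_idx n. ennreal (thermal_multi_ev n r k powr \<alpha> * thermal_multi_ev n s k powr (1 - \<alpha>) * (cmod (fock_inner (ket k) (ket k)))\<^sup>2))"
      unfolding S_def by (rule diag_sum) (simp add: fock_ket)
    also have "\<dots> = (\<Sum>\<^sub>\<infinity>k\<in>multi_idx n. ennreal (\<Prod>j<n. c j * q j ^ k j))"
      by (rule infsum_cong) (simp add: fock_ket multi_factor[OF assms(1,2)] c_def q_def t_def)
    finally show ?thesis .
  qed
  have S0: "S \<noteq> 0" unfolding S_eq by (rule S_nonzero[OF cpos qpos])
  have Stop: "S \<noteq> top \<longleftrightarrow> (\<forall>j<n. 0 < t j)"
  proof
    assume "S \<noteq> top"
    show "\<forall>j<n. 0 < t j"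
    proof (rule ccontr)
      assume "\<not> (\<forall>j<n. 0 < t j)"
      then obtain j where "j < n" "t j \<le> 0" by auto
      then have "1 \<le> q j" by (simp add: q_def)
      then have "S = top" unfolding S_eq by (rule S_infinite[OF cpos qpos \<open>j < n\<close>])
      then show False using \<open>S \<noteq> top\<close> by simp
    qed
  next
    assume "\<forall>j<n. 0 < t j"
    then have "\<forall>j<n. 0 < q j \<and> q j < 1" by (auto simp: q_def)
    then show "S \<noteq> top" unfolding S_eq by (rule S_finite[OF cpos])
  qed
  have D: "D_thermal \<alpha> n r s < \<infinity> \<longleftrightarrow> (\<alpha> < 1 \<or> S \<noteq> top)"
    unfolding D_thermal_def petz_renyi_def Let_def S_def[symmetric] using S0 assms(4)
    by auto
  have tpos: "0 < t j" if "j < n" "s j \<le> r j" for j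
  proof -
    have "t j = s j + \<alpha> * (r j - s j)" by (simp add: t_def algebra_simps)
    moreover have "0 \<le> \<alpha> * (r j - s j)" using that assms(3) by simp
    moreover have "0 < s j" using assms(2) that by simp
    ultimately show ?thesis by linarith
  qed
  have tlt: "0 < t j \<longleftrightarrow> \<alpha> < s j / (s j - r j)" if "j < n" "r j < s j" for j
  proof -
    have "t j = s j - \<alpha> * (s j - r j)" by (simp add: t_def algebra_simps)
    then show ?thesis using that by (simp add: pos_less_divide_eq)
  qed
  have part1: "(\<forall>j<n. s j \<le> r j) \<longrightarrow> D_thermal \<alpha> n r s < \<infinity>"
    using D Stop tpos by blast
  have part2: "D_thermal \<alpha> n r s < \<infinity> \<longleftrightarrow> \<alpha> < Min {s j / (s j - r j) | j. j < n \<and> r j < s j}"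
    if ex: "\<exists>j<n. r j < s j"
  proof -
    define M where "M = {s j / (s j - r j) | j. j < n \<and> r j < s j}"
    have M_eq: "M = (\<lambda>j. s j / (s j - r j)) ` {j. j < n \<and> r j < s j}" unfolding M_def by auto
    have finM: "finite M" unfolding M_eq by simp
    have neM: "M \<noteq> {}" using ex unfolding M_def by auto
    have Mlt: "\<alpha> < Min M \<longleftrightarrow> (\<forall>j<n. r j < s j \<longrightarrow> \<alpha> < s j / (s j - r j))"
      using finM neM unfolding M_eq by (auto simp: Min_gr_iff)
    have gt1: "1 < s j / (s j - r j)" if "j < n" "r j < s j" for j
      using that assms(1) by (simp add: less_divide_eq)
    show ?thesis
    proof (cases "\<alpha> < 1")
      case True
      have d: "D_thermal \<alpha> n r s < \<infinity>" using D True by simp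
      have "\<forall>j<n. r j < s j \<longrightarrow> \<alpha> < s j / (s j - r j)"
        using gt1 True by (meson less_trans)
      then have "\<alpha> < Min M" using Mlt by simp
      then show ?thesis using d unfolding M_def by simp
    next
      case False
      then have "D_thermal \<alpha> n r s < \<infinity> \<longleftrightarrow> (\<forall>j<n. 0 < t j)" using D Stop by simp
      also have "\<dots> \<longleftrightarrow> (\<forall>j<n. r j < s j \<longrightarrow> \<alpha> < s j / (s j - r j))"
        using tpos tlt by (meson not_less)
      finally show ?thesis using Mlt unfolding M_def by simp
    qed
  qed
  show ?thesis using part1 part2 by blast
qed

end
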